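(* Let $\varphi$ be a Boolean formula in 3-CNF and let $G$ be the graph constructed from $\varphi$ as described in the context. Let $C\subseteq V(G)$ be a minimum cluster deletion set of $G$. Then $C$ is a vertex cover of $G$. Hence $\mathrm{cvd}(G)=\mathrm{vc}(G)$.
   Context: Let $\varphi$ consist of clauses $C_1,\dots,C_m$ over variables $x_1,\dots,x_n$, each clause containing exactly three literals, $C_i=(L_i^1\vee L_i^2\vee L_i^3)$. The graph $G$ has vertex set $\{u_{r,s,i}: r\in\{1,2,3\}, s\in\{1,\dots,7\}, i\in\{1,\dots,m\}\}\cup\{v_{r,s,j}: r\in\{1,2\}, s\in\{1,2,3\}, j\in\{1,\dots,n\}\}$ and edge set consisting of: $\{u_{r,s,i},u_{r',s',i}\}$ for all $r\ne r'$ in $\{1,2,3\}$, all $s,s'\in\{1,\dots,7\}$, all $i$; $\{v_{1,s,j},v_{2,s',j}\}$ for all $s,s'\in\{1,2,3\}$, all $j$; $\{u_{r,s,i},v_{1,s',j}\}$ for all $s\in\{1,\dots,7\}$, $s'\in\{1,2,3\}$ whenever $L_i^r = x_j$; and $\{u_{r,s,i},v_{2,s',j}\}$ for all $s\in\{1,\dots,7\}$, $s'\in\{1,2,3\}$ whenever $L_i^r=\neg x_j$. A cluster deletion set of $G$ is a set $X\subseteq V(G)$ such that $G-X$ contains no induced path on three vertices; $\mathrm{cvd}(G)$ is the minimum size of such a set. A vertex cover is a set of vertices containing at least one endpoint of every edge; $\mathrm{vc}(G)$ is the minimum size of a vertex cover. *)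

theory Defs
  imports Main
begin

text \<open>Generic graph notions for a graph given by a vertex set VS and an edge predicate E
  (assumed symmetric; only edges between vertices of VS matter).\<close>

definition cluster_deletion_set :: "'a set \<Rightarrow> ('a \<Rightarrow> 'a \<Rightarrow> bool) \<Rightarrow> 'a set \<Rightarrow> bool" where
  "cluster_deletion_set VS E X \<longleftrightarrow> X \<subseteq> VS \<and>
     \<not> (\<exists>a b c. a \<in> VS - X \<and> b \<in> VS - X \<and> c \<in> VS - X \<and> a \<noteq> c \<and>
            E a b \<and> E b c \<and> \<not> E a c)"

definition vertex_cover :: "'a set \<Rightarrow> ('a \<Rightarrow> 'a \<Rightarrow> bool) \<Rightarrow> 'a set \<Rightarrow> bool" where
  "vertex_cover VS E X \<longleftrightarrow> X \<subseteq> VS \<and>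
     (\<forall>a\<in>VS. \<forall>b\<in>VS. E a b \<longrightarrow> a \<in> X \<or> b \<in> X)"

definition min_cluster_deletion_set :: "'a set \<Rightarrow> ('a \<Rightarrow> 'a \<Rightarrow> bool) \<Rightarrow> 'a set \<Rightarrow> bool" where
  "min_cluster_deletion_set VS E X \<longleftrightarrow> cluster_deletion_set VS E X \<and>
     (\<forall>Y. cluster_deletion_set VS E Y \<longrightarrow> card X \<le> card Y)"

definition cvd :: "'a set \<Rightarrow> ('a \<Rightarrow> 'a \<Rightarrow> bool) \<Rightarrow> nat" where
  "cvd VS E = Min {card X | X. cluster_deletion_set VS E X}"

definition vc :: "'a set \<Rightarrow> ('a \<Rightarrow> 'a \<Rightarrow> bool) \<Rightarrow> nat" where
  "vc VS E = Min {card X | X. vertex_cover VS E X}"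

text \<open>A 3-CNF formula with clauses C_1..C_m over x_1..x_n is given by
  L i r = (j, True) meaning L_i^r = x_j, and L i r = (j, False) meaning L_i^r = \<not>x_j
  (for i \<in> {1..m}, r \<in> {1,2,3}).\<close>

datatype vtx = U nat nat nat | V nat nat nat

definition G_verts :: "nat \<Rightarrow> nat \<Rightarrow> vtx set" where
  "G_verts n m =
     {U r s i | r s i. r \<in> {1..3} \<and> s \<in> {1..7} \<and> i \<in> {1..m}} \<union>
     {V r s j | r s j. r \<in> {1..2} \<and> s \<in> {1..3} \<and> j \<in> {1..n}}"

definition G_gen :: "(nat \<Rightarrow> nat \<Rightarrow> nat \<times> bool) \<Rightarrow> vtx \<Rightarrow> vtx \<Rightarrow> bool" where
  "G_gen L x y \<longleftrightarrow>
     (\<exists>r s r' s' i. x = U r s i \<and> y = U r' s' i \<and> r \<noteq> r') \<or>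
     (\<exists>s s' j. x = V 1 s j \<and> y = V 2 s' j) \<or>
     (\<exists>r s i s' j. x = U r s i \<and> y = V 1 s' j \<and> L i r = (j, True)) \<or>
     (\<exists>r s i s' j. x = U r s i \<and> y = V 2 s' j \<and> L i r = (j, False))"

definition G_edge :: "(nat \<Rightarrow> nat \<Rightarrow> nat \<times> bool) \<Rightarrow> vtx \<Rightarrow> vtx \<Rightarrow> bool" where
  "G_edge L x y \<longleftrightarrow> G_gen L x y \<or> G_gen L y x"

end

theory Submission
  imports Defs
begin

lemma E_sym: "G_edge L x y = G_edge L y x"
  by (auto simp: G_edge_def)

lemma E_UU: "G_edge L (U r s i) (U r' s' i') \<longleftrightarrow> i = i' \<and> r \<noteq> r'"
  by (auto simp: G_edge_def G_gen_def)

lemma E_VV: "G_edge L (V p s j) (V p' s' j') \<longleftrightarrow> j = j' \<and> (p = 1 \<and> p' = 2 \<or> p = 2 \<and> p' = 1)"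
  by (auto simp: G_edge_def G_gen_def)

lemma E_UV: "G_edge L (U r s i) (V p s' j) \<longleftrightarrow> (p = 1 \<and> L i r = (j, True)) \<or> (p = 2 \<and> L i r = (j, False))"
  by (auto simp: G_edge_def G_gen_def)

lemma E_VU: "G_edge L (V p s' j) (U r s i) \<longleftrightarrow> (p = 1 \<and> L i r = (j, True)) \<or> (p = 2 \<and> L i r = (j, False))"
  using E_UV E_sym by metis

lemma mem_U: "U r s i \<in> G_verts n m \<longleftrightarrow> r \<in> {1..3} \<and> s \<in> {1..7} \<and> i \<in> {1..m}"
  by (auto simp: G_verts_def)

lemma mem_V: "V p s j \<in> G_verts n m \<longleftrightarrow> p \<in> {1..2} \<and> s \<in> {1..3} \<and> j \<in> {1..n}"
  by (auto simp: G_verts_def)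

lemma fin_verts: "finite (G_verts n m)"
proof -
  have "G_verts n m \<subseteq> (\<lambda>(r,s,i). U r s i) ` ({1..3}\<times>{1..7}\<times>{1..m}) \<union> (\<lambda>(r,s,j). V r s j) ` ({1..2}\<times>{1..3}\<times>{1..n})"
    by (auto simp: G_verts_def image_iff)
  then show ?thesis by (rule finite_subset) auto
qed

lemma cds_modify:
  assumes "cluster_deletion_set VS E X" "X' \<subseteq> VS" "VS - X' \<subseteq> (VS - X) \<union> P"
    "\<forall>p\<in>P. \<forall>y\<in>VS. E p y \<longrightarrow> y \<in> X'" "\<And>x y. E x y = E y x"
  shows "cluster_deletion_set VS E X'"
  unfolding cluster_deletion_set_def
proof (intro conjI notI)
  show "X' \<subseteq> VS" by fact
next
  assume "\<exists>a b c. a \<in> VS - X' \<and> b \<in> VS - X' \<and> c \<in> VS - X' \<and> a \<noteq> c \<and> E a b \<and> E b c \<and> \<not> E a c"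
  then obtain a b c where abc: "a \<in> VS - X'" "b \<in> VS - X'" "c \<in> VS - X'" "a \<noteq> c" "E a b" "E b c" "\<not> E a c"
    by blast
  have "b \<notin> P" using abc assms(4,5) by blast
  moreover have "a \<notin> P" using abc assms(4,5) by blast
  moreover have "c \<notin> P" using abc assms(4,5) by blast
  ultimately have "a \<in> VS - X" "b \<in> VS - X" "c \<in> VS - X" using abc assms(3) by auto
  then show False using assms(1) abc unfolding cluster_deletion_set_def by blast
qed

lemma E_part: "G_edge L (U r s i) b \<Longrightarrow> G_edge L (U r t i) b"
  by (cases b) (auto simp: E_UU E_UV)

lemma p3:
  assumes "cluster_deletion_set VS E X" "x \<in> VS - X" "y \<in> VS - X" "z \<in> VS - X" "x \<noteq> z" "E x y" "E y z" "\<not> E x z"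
  shows False
  using assms unfolding cluster_deletion_set_def by blast

lemma caseU:
  assumes A: "\<forall>i\<in>{1..m}. \<forall>r\<in>{1..3}. fst (L i r) \<in> {1..n}"
    and X: "cluster_deletion_set (G_verts n m) (G_edge L) X"
    and a: "U r s i \<in> G_verts n m - X" and b: "b \<in> G_verts n m - X" and e: "G_edge L (U r s i) b"
  shows "\<exists>X'. cluster_deletion_set (G_verts n m) (G_edge L) X' \<and> card X' < card X"
proof -
  let ?VS = "G_verts n m"
  let ?E = "G_edge L"
  have ri: "r \<in> {1..3}" "s \<in> {1..7}" "i \<in> {1..m}" using a mem_U by auto
  obtain j p where Lir: "L i r = (j, p)" by fastforce
  have j: "j \<in> {1..n}" using A ri Lir by force
  define q where "q = (if p then 1 else 2::nat)"
  define part where "part = (\<lambda>r'. (\<lambda>t. U r' t i) ` {1..7})"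
  define P where "P = part r"
  define R where "R = {1..3} - {r::nat}"
  define Oth where "Oth = (\<Union>r'\<in>R. part r')"
  define W where "W = (\<lambda>t. V q t j) ` {1..3}"
  define X' where "X' = (X - P) \<union> Oth \<union> W"
  have fin: "finite ?VS" by (rule fin_verts)
  have XV: "X \<subseteq> ?VS" using X unfolding cluster_deletion_set_def by blast
  have finX: "finite X" using XV fin finite_subset by blast
  have OV: "Oth \<subseteq> ?VS" using ri unfolding Oth_def part_def R_def by (auto simp: mem_U)
  have WV: "W \<subseteq> ?VS" using j unfolding W_def q_def by (auto simp: mem_V)
  have X'V: "X' \<subseteq> ?VS" using XV OV WV unfolding X'_def by blast
  have nb: "\<forall>x\<in>P. \<forall>y\<in>?VS. ?E x y \<longrightarrow> y \<in> X'"
  proof (intro ballI impI)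
    fix x y assume x: "x \<in> P" and y: "y \<in> ?VS" and exy: "?E x y"
    obtain t where xt: "x = U r t i" using x unfolding P_def part_def by blast
    show "y \<in> X'"
    proof (cases y)
      case (U r' t' i')
      then have h: "i' = i" "r' \<noteq> r" "r' \<in> {1..3}" "t' \<in> {1..7}" using exy xt y by (auto simp: E_UU mem_U)
      have "y \<in> part r'" using U h unfolding part_def by auto
      moreover have "r' \<in> R" using h unfolding R_def by auto
      ultimately have "y \<in> Oth" unfolding Oth_def by blast
      then show ?thesis unfolding X'_def by blast
    next
      case (V p' t' j')
      then have "y \<in> W" using exy xt y Lir unfolding W_def q_def by (auto simp: E_UV mem_V)
      then show ?thesis unfolding X'_def by blast
    qed
  qed
  have sub: "?VS - X' \<subseteq> (?VS - X) \<union> P" unfolding X'_def by blast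
  have cds: "cluster_deletion_set ?VS ?E X'"
    by (rule cds_modify[OF X X'V sub nb E_sym])
  have P1: "P - X = {U r s i}"
  proof
    show "{U r s i} \<subseteq> P - X" using a ri unfolding P_def part_def by auto
  next
    show "P - X \<subseteq> {U r s i}"
    proof
      fix x assume x: "x \<in> P - X"
      then obtain t where xt: "x = U r t i" "t \<in> {1..7}" unfolding P_def part_def by blast
      have xv: "x \<in> ?VS - X" using x xt ri by (auto simp: mem_U)
      show "x \<in> {U r s i}"
      proof (rule ccontr)
        assume "x \<notin> {U r s i}"
        then have ne: "x \<noteq> U r s i" by simp
        have "?E x b" using E_part[OF e] xt by simp
        moreover have "?E b (U r s i)" using e E_sym by metis
        moreover have "\<not> ?E x (U r s i)" using xt by (simp add: E_UU)
        ultimately show False using p3[OF X xv b a ne] by blast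
      qed
    qed
  qed
  have cardpart: "card (part r') = 7" for r'
    unfolding part_def by (subst card_image) (auto simp: inj_on_def)
  have finpart: "finite (part r')" for r' unfolding part_def by simp
  have cP: "card (X \<inter> P) = 6"
  proof -
    have finP: "finite P" unfolding P_def by (rule finpart)
    have e1: "P = (X \<inter> P) \<union> (P - X)" by blast
    have "card ((X \<inter> P) \<union> (P - X)) = card (X \<inter> P) + card (P - X)"
      by (rule card_Un_disjoint) (use finP in auto)
    then have "card P = card (X \<inter> P) + card (P - X)" using e1 by simp
    then show ?thesis using P1 cardpart[of r] unfolding P_def by simp
  qed
  have cXP: "card (X - P) = card X - 6"
    using card_Diff_subset_Int[of X P] finX cP by simp
  have cXge: "card X \<ge> 6" using cP card_mono[OF finX, of "X \<inter> P"] by simp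
  have Opart: "card (part r' - X) \<le> 1" if r': "r' \<in> R" for r'
  proof -
    have "\<forall>x\<in>part r' - X. \<forall>y\<in>part r' - X. x = y"
    proof (intro ballI, rule ccontr)
      fix x y assume x: "x \<in> part r' - X" and y: "y \<in> part r' - X" and ne: "x \<noteq> y"
      obtain t t' where xt: "x = U r' t i" "t \<in> {1..7}" and yt: "y = U r' t' i" "t' \<in> {1..7}"
        using x y unfolding part_def by blast
      have rr: "r' \<in> {1..3}" "r' \<noteq> r" using r' unfolding R_def by auto
      have xv: "x \<in> ?VS - X" "y \<in> ?VS - X" using x y xt yt rr ri by (auto simp: mem_U)
      have "?E x (U r s i)" "?E (U r s i) y" "\<not> ?E x y" using xt yt rr ne by (auto simp: E_UU)
      then show False using p3[OF X xv(1) a xv(2) ne] by blast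
    qed
    then show ?thesis using card_le_Suc0_iff_eq[of "part r' - X"] finpart by simp
  qed
  have cR: "card R = 2" using ri unfolding R_def by auto
  have cO: "card (Oth - X) \<le> 2"
  proof -
    have "Oth - X = (\<Union>r'\<in>R. part r' - X)" unfolding Oth_def by blast
    then have "card (Oth - X) \<le> (\<Sum>r'\<in>R. card (part r' - X))"
      using card_UN_le[of R "\<lambda>r'. part r' - X"] unfolding R_def by simp
    also have "\<dots> \<le> (\<Sum>r'\<in>R. 1)" by (rule sum_mono) (rule Opart)
    finally show ?thesis using cR by simp
  qed
  have cW: "card (W - X) \<le> 3"
  proof -
    have "card W \<le> 3" unfolding W_def using card_image_le[of "{1..3::nat}" "\<lambda>t. V q t j"] by simp
    moreover have "card (W - X) \<le> card W" by (rule card_mono) (auto simp: W_def)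
    ultimately show ?thesis by linarith
  qed
  have d1: "Oth \<inter> P = {}" unfolding Oth_def P_def part_def R_def by auto
  have d2: "W \<inter> P = {}" unfolding W_def P_def part_def by auto
  have "X' = (X - P) \<union> (Oth - X) \<union> (W - X)"
    unfolding X'_def using d1 d2 by blast
  moreover have "card ((X - P) \<union> (Oth - X) \<union> (W - X)) \<le> card ((X - P) \<union> (Oth - X)) + card (W - X)"
    by (rule card_Un_le)
  moreover have "card ((X - P) \<union> (Oth - X)) \<le> card (X - P) + card (Oth - X)"
    by (rule card_Un_le)
  ultimately have "card X' \<le> card (X - P) + card (Oth - X) + card (W - X)" by (simp only:)
  then have "card X' < card X" using cXP cO cW cXge by linarith
  then show ?thesis using cds by blast
qed

lemma caseV:
  assumes X: "cluster_deletion_set (G_verts n m) (G_edge L) X"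
    and b1: "V 1 s j \<in> G_verts n m - X" and b2: "V 2 s' j \<in> G_verts n m - X"
  shows "\<exists>X'. cluster_deletion_set (G_verts n m) (G_edge L) X' \<and> card X' < card X"
proof -
  let ?VS = "G_verts n m"
  let ?E = "G_edge L"
  have jj: "j \<in> {1..n}" "s \<in> {1..3}" "s' \<in> {1..3}" using b1 b2 mem_V by auto
  define P where "P = (\<lambda>t. V 1 t j) ` {1..3}"
  define W where "W = (\<lambda>t. V 2 t j) ` {1..3}"
  define X' where "X' = (X - P) \<union> W"
  have fin: "finite ?VS" by (rule fin_verts)
  have XV: "X \<subseteq> ?VS" using X unfolding cluster_deletion_set_def by blast
  have finX: "finite X" using XV fin finite_subset by blast
  have WV: "W \<subseteq> ?VS" using jj unfolding W_def by (auto simp: mem_V)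
  have X'V: "X' \<subseteq> ?VS" using XV WV unfolding X'_def by blast
  have e12: "?E (V 1 s j) (V 2 s' j)" by (simp add: E_VV)
  have nb: "\<forall>x\<in>P. \<forall>y\<in>?VS. ?E x y \<longrightarrow> y \<in> X'"
  proof (intro ballI impI)
    fix x y assume x: "x \<in> P" and y: "y \<in> ?VS" and exy: "?E x y"
    obtain t where xt: "x = V 1 t j" using x unfolding P_def by blast
    show "y \<in> X'"
    proof (cases y)
      case (U r t' i)
      then have Lt: "L i r = (j, True)" using exy xt by (simp add: E_VU)
      have "y \<in> X"
      proof (rule ccontr)
        assume "y \<notin> X"
        then have yv: "y \<in> ?VS - X" using y by simp
        have "?E y (V 1 s j)" using U Lt by (simp add: E_UV)
        moreover have "\<not> ?E y (V 2 s' j)" using U Lt by (simp add: E_UV)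
        moreover have "y \<noteq> V 2 s' j" using U by simp
        ultimately show False using p3[OF X yv b1 b2] e12 by blast
      qed
      moreover have "y \<notin> P" using U unfolding P_def by auto
      ultimately show ?thesis unfolding X'_def by blast
    next
      case (V p' t' j')
      then have "y \<in> W" using exy xt y unfolding W_def by (auto simp: E_VV mem_V)
      then show ?thesis unfolding X'_def by blast
    qed
  qed
  have sub: "?VS - X' \<subseteq> (?VS - X) \<union> P" unfolding X'_def by blast
  have cds: "cluster_deletion_set ?VS ?E X'"
    by (rule cds_modify[OF X X'V sub nb E_sym])
  have P1: "P - X \<subseteq> {V 1 s j}"
  proof
    fix x assume x: "x \<in> P - X"
    then obtain t where xt: "x = V 1 t j" "t \<in> {1..3}" unfolding P_def by blast
    have xv: "x \<in> ?VS - X" using x xt jj by (auto simp: mem_V)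
    show "x \<in> {V 1 s j}"
    proof (rule ccontr)
      assume "x \<notin> {V 1 s j}"
      then have ne: "x \<noteq> V 1 s j" by simp
      have "?E x (V 2 s' j)" "?E (V 2 s' j) (V 1 s j)" "\<not> ?E x (V 1 s j)" using xt by (auto simp: E_VV)
      then show False using p3[OF X xv b2 b1 ne] by blast
    qed
  qed
  have W1: "W - X \<subseteq> {V 2 s' j}"
  proof
    fix x assume x: "x \<in> W - X"
    then obtain t where xt: "x = V 2 t j" "t \<in> {1..3}" unfolding W_def by blast
    have xv: "x \<in> ?VS - X" using x xt jj by (auto simp: mem_V)
    show "x \<in> {V 2 s' j}"
    proof (rule ccontr)
      assume "x \<notin> {V 2 s' j}"
      then have ne: "x \<noteq> V 2 s' j" by simp
      have "?E x (V 1 s j)" "?E (V 1 s j) (V 2 s' j)" "\<not> ?E x (V 2 s' j)" using xt by (auto simp: E_VV)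
      then show False using p3[OF X xv b1 b2 ne] by blast
    qed
  qed
  have finP: "finite P" unfolding P_def by simp
  have cardP: "card P = 3" unfolding P_def by (subst card_image) (auto simp: inj_on_def)
  have cP: "card (X \<inter> P) \<ge> 2"
  proof -
    have e1: "P = (X \<inter> P) \<union> (P - X)" by blast
    have "card ((X \<inter> P) \<union> (P - X)) = card (X \<inter> P) + card (P - X)"
      by (rule card_Un_disjoint) (use finP in auto)
    then have "card P = card (X \<inter> P) + card (P - X)" using e1 by simp
    moreover have "card (P - X) \<le> 1" using card_mono[OF _ P1] by simp
    ultimately show ?thesis using cardP by linarith
  qed
  have cXP: "card (X - P) = card X - card (X \<inter> P)"
    using card_Diff_subset_Int[of X P] finX by simp
  have cXge: "card X \<ge> card (X \<inter> P)" using card_mono[OF finX, of "X \<inter> P"] by simp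
  have cW: "card (W - X) \<le> 1" using card_mono[OF _ W1] by simp
  have d2: "W \<inter> P = {}" unfolding W_def P_def by auto
  have "X' = (X - P) \<union> (W - X)"
    unfolding X'_def using d2 by blast
  moreover have "card ((X - P) \<union> (W - X)) \<le> card (X - P) + card (W - X)"
    by (rule card_Un_le)
  ultimately have "card X' \<le> card (X - P) + card (W - X)" by (simp only:)
  then have "card X' < card X" using cXP cW cXge cP by linarith
  then show ?thesis using cds by blast
qed

lemma not_min:
  assumes A: "\<forall>i\<in>{1..m}. \<forall>r\<in>{1..3}. fst (L i r) \<in> {1..n}"
    and X: "cluster_deletion_set (G_verts n m) (G_edge L) X"
    and a: "a \<in> G_verts n m - X" and b: "b \<in> G_verts n m - X" and e: "G_edge L a b"
  shows "\<exists>X'. cluster_deletion_set (G_verts n m) (G_edge L) X' \<and> card X' < card X"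
proof (cases a)
  case (U r s i)
  then show ?thesis using caseU[OF A X _ b] a e by blast
next
  case (V p s j)
  show ?thesis
  proof (cases b)
    case (U r s' i)
    then show ?thesis using caseU[OF A X _ a] b e E_sym by metis
  next
    case (V p' s' j')
    then have "j = j'" "p = 1 \<and> p' = 2 \<or> p = 2 \<and> p' = 1" using e \<open>a = V p s j\<close> by (auto simp: E_VV)
    then show ?thesis using caseV[OF X] a b V \<open>a = V p s j\<close> by blast
  qed
qed

theorem lemma12:
  fixes n m :: nat and L :: "nat \<Rightarrow> nat \<Rightarrow> nat \<times> bool" and C :: "vtx set"
  assumes "\<forall>i\<in>{1..m}. \<forall>r\<in>{1..3}. fst (L i r) \<in> {1..n}"
    and "min_cluster_deletion_set (G_verts n m) (G_edge L) C"
  shows "vertex_cover (G_verts n m) (G_edge L) C \<and>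
         cvd (G_verts n m) (G_edge L) = vc (G_verts n m) (G_edge L)"
proof -
  let ?VS = "G_verts n m"
  let ?E = "G_edge L"
  have C: "cluster_deletion_set ?VS ?E C" and Cmin: "\<And>Y. cluster_deletion_set ?VS ?E Y \<Longrightarrow> card C \<le> card Y"
    using assms(2) unfolding min_cluster_deletion_set_def by auto
  have CV: "C \<subseteq> ?VS" using C unfolding cluster_deletion_set_def by blast
  have vcC: "vertex_cover ?VS ?E C"
    unfolding vertex_cover_def
  proof (intro conjI CV ballI impI)
    fix a b assume a: "a \<in> ?VS" and b: "b \<in> ?VS" and e: "?E a b"
    show "a \<in> C \<or> b \<in> C"
    proof (rule ccontr)
      assume "\<not> (a \<in> C \<or> b \<in> C)"
      then have "a \<in> ?VS - C" "b \<in> ?VS - C" using a b by auto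
      then obtain X' where "cluster_deletion_set ?VS ?E X'" "card X' < card C"
        using not_min[OF assms(1) C _ _ e] by blast
      then show False using Cmin by fastforce
    qed
  qed
  have vc_cds: "cluster_deletion_set ?VS ?E Y" if "vertex_cover ?VS ?E Y" for Y
    using that unfolding vertex_cover_def cluster_deletion_set_def by blast
  have fin: "finite ?VS" by (rule fin_verts)
  have finS1: "finite {card X | X. cluster_deletion_set ?VS ?E X}"
  proof (rule finite_subset[of _ "{..card ?VS}"])
    show "{card X | X. cluster_deletion_set ?VS ?E X} \<subseteq> {..card ?VS}"
      using fin card_mono unfolding cluster_deletion_set_def by fastforce
  qed simp
  have finS2: "finite {card X | X. vertex_cover ?VS ?E X}"
  proof (rule finite_subset[of _ "{..card ?VS}"])
    show "{card X | X. vertex_cover ?VS ?E X} \<subseteq> {..card ?VS}"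
      using fin card_mono unfolding vertex_cover_def by fastforce
  qed simp
  have "cvd ?VS ?E = card C"
    unfolding cvd_def by (rule Min_eqI[OF finS1]) (use C Cmin in auto)
  moreover have "vc ?VS ?E = card C"
    unfolding vc_def by (rule Min_eqI[OF finS2]) (use vcC Cmin vc_cds in auto)
  ultimately show ?thesis using vcC by simp
qed

end
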